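(* Let $U$ be a finite set of men and $W_1\subseteq W_2$ finite sets of women with $|W_1|\le|W_2|=|U|$, each man having a strict total order over $W_2$ and each woman a strict total order over $U$. Let $M_1'$ be a stable matching of $(U,W_1)$ and $M_2$ a stable matching of $(U,W_2)$, and let $M_2'$ be the union of: the pairs of $M_1'\cap M_2$; the $M_2$-edges of each path component and each Type I cycle of $G(M_1',M_2)$; the $M_1'$-edges of each Type II cycle of $G(M_1',M_2)$. Then $M_2'$ men-dominates $M_2$.
   Context: A matching is a set of man–woman pairs with each person in at most one pair; a matching is stable if it has no blocking pair $(u,w)\notin M$ with ($u$ unmatched or preferring $w$ to his partner) and ($w$ unmatched or preferring $u$ to her partner). $M$ men-dominates $M'$ if every man's partner in $M$ is at least as good for him as his partner in $M'$. The difference graph $G(M,M')$ has vertex set $U\cup W_2$ and edge set $M\triangle M'$. A cycle $C$ of $G(M_1',M_2)$ is of Type I if every man in $C$ strictly prefers his partner in $M_2$ to his partner in $M_1'$ and every woman in $C$ strictly prefers her partner in $M_1'$ to her partner in $M_2$; of Type II if every man in $C$ strictly prefers his partner in $M_1'$ to his partner in $M_2$ and every woman strictly prefers her partner in $M_2$ to her partner in $M_1'$. *)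

theory Defs
  imports Main
begin

text \<open>A preference of man u is a relation
  prefM u :: 'w \<Rightarrow> 'w \<Rightarrow> bool, where prefM u w w' means u strictly prefers w to w'.
  Similarly prefW w u u' means woman w strictly prefers u to u'.\<close>

definition strict_total_on :: "'a set \<Rightarrow> ('a \<Rightarrow> 'a \<Rightarrow> bool) \<Rightarrow> bool" where
  "strict_total_on A r \<longleftrightarrow>
     (\<forall>x\<in>A. \<not> r x x) \<and>
     (\<forall>x\<in>A. \<forall>y\<in>A. \<forall>z\<in>A. r x y \<longrightarrow> r y z \<longrightarrow> r x z) \<and>
     (\<forall>x\<in>A. \<forall>y\<in>A. x \<noteq> y \<longrightarrow> r x y \<or> r y x)"

definition is_matching :: "'m set \<Rightarrow> 'w set \<Rightarrow> ('m \<times> 'w) set \<Rightarrow> bool" where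
  "is_matching U W M \<longleftrightarrow> M \<subseteq> U \<times> W \<and>
     (\<forall>u w w'. (u, w) \<in> M \<longrightarrow> (u, w') \<in> M \<longrightarrow> w = w') \<and>
     (\<forall>u u' w. (u, w) \<in> M \<longrightarrow> (u', w) \<in> M \<longrightarrow> u = u')"

definition blocking_pair ::
  "('m \<Rightarrow> 'w \<Rightarrow> 'w \<Rightarrow> bool) \<Rightarrow> ('w \<Rightarrow> 'm \<Rightarrow> 'm \<Rightarrow> bool) \<Rightarrow> ('m \<times> 'w) set \<Rightarrow> 'm \<Rightarrow> 'w \<Rightarrow> bool" where
  "blocking_pair prefM prefW M u w \<longleftrightarrow> (u, w) \<notin> M \<and>
     ((\<forall>w'. (u, w') \<notin> M) \<or> (\<exists>w'. (u, w') \<in> M \<and> prefM u w w')) \<and>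
     ((\<forall>u'. (u', w) \<notin> M) \<or> (\<exists>u'. (u', w) \<in> M \<and> prefW w u u'))"

definition stable_matching ::
  "('m \<Rightarrow> 'w \<Rightarrow> 'w \<Rightarrow> bool) \<Rightarrow> ('w \<Rightarrow> 'm \<Rightarrow> 'm \<Rightarrow> bool) \<Rightarrow> 'm set \<Rightarrow> 'w set \<Rightarrow> ('m \<times> 'w) set \<Rightarrow> bool" where
  "stable_matching prefM prefW U W M \<longleftrightarrow> is_matching U W M \<and>
     (\<forall>u\<in>U. \<forall>w\<in>W. \<not> blocking_pair prefM prefW M u w)"

definition men_dominates ::
  "('m \<Rightarrow> 'w \<Rightarrow> 'w \<Rightarrow> bool) \<Rightarrow> 'm set \<Rightarrow> ('m \<times> 'w) set \<Rightarrow> ('m \<times> 'w) set \<Rightarrow> bool" where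
  "men_dominates prefM U M M' \<longleftrightarrow>
     (\<forall>u\<in>U. \<forall>w'. (u, w') \<in> M' \<longrightarrow> (\<exists>w. (u, w) \<in> M \<and> (w = w' \<or> prefM u w w')))"

definition dg_adj :: "('m \<times> 'w) set \<Rightarrow> ('m \<times> 'w) set \<Rightarrow> ('m + 'w) \<Rightarrow> ('m + 'w) \<Rightarrow> bool" where
  "dg_adj M M' x y \<longleftrightarrow> (\<exists>u w. (u, w) \<in> (M - M') \<union> (M' - M) \<and>
      ((x = Inl u \<and> y = Inr w) \<or> (x = Inr w \<and> y = Inl u)))"

definition dg_vertices :: "'m set \<Rightarrow> 'w set \<Rightarrow> ('m + 'w) set" where
  "dg_vertices U W = Inl ` U \<union> Inr ` W"

definition dg_component ::
  "'m set \<Rightarrow> 'w set \<Rightarrow> ('m \<times> 'w) set \<Rightarrow> ('m \<times> 'w) set \<Rightarrow> ('m + 'w) \<Rightarrow> ('m + 'w) set" where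
  "dg_component U W M M' v = {x \<in> dg_vertices U W. (v, x) \<in> {(a, b). dg_adj M M' a b}\<^sup>*}"

definition dg_components ::
  "'m set \<Rightarrow> 'w set \<Rightarrow> ('m \<times> 'w) set \<Rightarrow> ('m \<times> 'w) set \<Rightarrow> ('m + 'w) set set" where
  "dg_components U W M M' = dg_component U W M M' ` dg_vertices U W"

text \<open>The difference graph of two matchings has maximum degree 2, so each component is a
  path or a cycle; a (finite) component is a cycle exactly when every vertex has degree 2.\<close>
definition dg_cycle ::
  "'m set \<Rightarrow> 'w set \<Rightarrow> ('m \<times> 'w) set \<Rightarrow> ('m \<times> 'w) set \<Rightarrow> ('m + 'w) set \<Rightarrow> bool" where
  "dg_cycle U W M M' C \<longleftrightarrow> C \<in> dg_components U W M M' \<and>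
      (\<forall>x\<in>C. card {y. dg_adj M M' x y} = 2)"

definition dg_path ::
  "'m set \<Rightarrow> 'w set \<Rightarrow> ('m \<times> 'w) set \<Rightarrow> ('m \<times> 'w) set \<Rightarrow> ('m + 'w) set \<Rightarrow> bool" where
  "dg_path U W M M' C \<longleftrightarrow> C \<in> dg_components U W M M' \<and> \<not> dg_cycle U W M M' C"

definition typeI_cycle where
  "typeI_cycle prefM prefW U W M1 M2 C \<longleftrightarrow> dg_cycle U W M1 M2 C \<and>
     (\<forall>u w w'. Inl u \<in> C \<longrightarrow> (u, w) \<in> M2 \<longrightarrow> (u, w') \<in> M1 \<longrightarrow> prefM u w w') \<and>
     (\<forall>w u u'. Inr w \<in> C \<longrightarrow> (u', w) \<in> M1 \<longrightarrow> (u, w) \<in> M2 \<longrightarrow> prefW w u' u)"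

definition typeII_cycle where
  "typeII_cycle prefM prefW U W M1 M2 C \<longleftrightarrow> dg_cycle U W M1 M2 C \<and>
     (\<forall>u w w'. Inl u \<in> C \<longrightarrow> (u, w) \<in> M2 \<longrightarrow> (u, w') \<in> M1 \<longrightarrow> prefM u w' w) \<and>
     (\<forall>w u u'. Inr w \<in> C \<longrightarrow> (u', w) \<in> M1 \<longrightarrow> (u, w) \<in> M2 \<longrightarrow> prefW w u u')"

text \<open>An edge (u,w) of the difference
  graph lies in component C iff Inl u \<in> C.\<close>
definition M2_prime where
  "M2_prime prefM prefW U W M1 M2 =
     (M1 \<inter> M2)
     \<union> {(u, w). (u, w) \<in> M2 - M1 \<and> (\<exists>C. dg_path U W M1 M2 C \<and> Inl u \<in> C)}
     \<union> {(u, w). (u, w) \<in> M2 - M1 \<and> (\<exists>C. typeI_cycle prefM prefW U W M1 M2 C \<and> Inl u \<in> C)}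
     \<union> {(u, w). (u, w) \<in> M1 - M2 \<and> (\<exists>C. typeII_cycle prefM prefW U W M1 M2 C \<and> Inl u \<in> C)}"

end

theory Submission
  imports Defs
begin

lemma card_le1_aux: "(\<And>a b. a \<in> X \<Longrightarrow> b \<in> X \<Longrightarrow> a = b) \<Longrightarrow> card X \<le> 1"
  by (cases "finite X") (auto simp: card_le_Suc0_iff_eq)

context
  fixes U :: "'m set" and W1 W2 :: "'w set"
    and prefM :: "'m \<Rightarrow> 'w \<Rightarrow> 'w \<Rightarrow> bool" and prefW :: "'w \<Rightarrow> 'm \<Rightarrow> 'm \<Rightarrow> bool"
    and M1 M2 :: "('m \<times> 'w) set"
  assumes fin: "finite U" and sub: "W1 \<subseteq> W2"
    and tm: "\<forall>u\<in>U. strict_total_on W2 (prefM u)"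
    and tw: "\<forall>w\<in>W2. strict_total_on U (prefW w)"
    and s1: "stable_matching prefM prefW U W1 M1"
    and s2: "stable_matching prefM prefW U W2 M2"
begin

lemma M1_sub: "M1 \<subseteq> U \<times> W2" using s1 sub by (auto simp: stable_matching_def is_matching_def)
lemma M2_sub: "M2 \<subseteq> U \<times> W2" using s2 by (auto simp: stable_matching_def is_matching_def)
lemma M1_u: "(u,w) \<in> M1 \<Longrightarrow> (u,w') \<in> M1 \<Longrightarrow> w = w'"
  using s1 by (auto simp: stable_matching_def is_matching_def)
lemma M1_w: "(u,w) \<in> M1 \<Longrightarrow> (u',w) \<in> M1 \<Longrightarrow> u = u'"
  using s1 by (auto simp: stable_matching_def is_matching_def)
lemma M2_u: "(u,w) \<in> M2 \<Longrightarrow> (u,w') \<in> M2 \<Longrightarrow> w = w'"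
  using s2 by (auto simp: stable_matching_def is_matching_def)
lemma M2_w: "(u,w) \<in> M2 \<Longrightarrow> (u',w) \<in> M2 \<Longrightarrow> u = u'"
  using s2 by (auto simp: stable_matching_def is_matching_def)

lemma totM: "u \<in> U \<Longrightarrow> w \<in> W2 \<Longrightarrow> w' \<in> W2 \<Longrightarrow> w \<noteq> w' \<Longrightarrow> prefM u w w' \<or> prefM u w' w"
  using tm by (auto simp: strict_total_on_def)
lemma irrM: "u \<in> U \<Longrightarrow> w \<in> W2 \<Longrightarrow> \<not> prefM u w w"
  using tm by (auto simp: strict_total_on_def)
lemma totW: "w \<in> W2 \<Longrightarrow> u \<in> U \<Longrightarrow> u' \<in> U \<Longrightarrow> u \<noteq> u' \<Longrightarrow> prefW w u u' \<or> prefW w u' u"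
  using tw by (auto simp: strict_total_on_def)

lemma block1:
  assumes "(u,a) \<in> M1" "prefM u w a" "(b,w) \<in> M1" "prefW w u b" shows False
proof -
  have uU: "u \<in> U" and "w \<in> W1" using assms s1 by (auto simp: stable_matching_def is_matching_def)
  have aW: "a \<in> W2" using assms M1_sub by auto
  have "(u,w) \<notin> M1"
  proof
    assume "(u,w) \<in> M1"
    then have "a = w" using assms M1_u by blast
    then show False using irrM[OF uU aW] assms by simp
  qed
  then have "blocking_pair prefM prefW M1 u w" unfolding blocking_pair_def using assms by blast
  then show False using s1 uU \<open>w \<in> W1\<close> by (auto simp: stable_matching_def)
qed

lemma block2:
  assumes "(u,a) \<in> M2" "prefM u w a" "(b,w) \<in> M2" "prefW w u b" shows False
proof -
  have uU: "u \<in> U" and wW: "w \<in> W2" using assms M2_sub by auto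
  have aW: "a \<in> W2" using assms M2_sub by auto
  have "(u,w) \<notin> M2"
  proof
    assume "(u,w) \<in> M2"
    then have "a = w" using assms M2_u by blast
    then show False using irrM[OF uU aW] assms by simp
  qed
  then have "blocking_pair prefM prefW M2 u w" unfolding blocking_pair_def using assms by blast
  then show False using s2 uU wW by (auto simp: stable_matching_def)
qed

lemma adj_Inl: "dg_adj M1 M2 (Inl u) y \<longleftrightarrow> (\<exists>w. y = Inr w \<and> (u,w) \<in> (M1 - M2) \<union> (M2 - M1))"
  by (auto simp: dg_adj_def)
lemma adj_Inr: "dg_adj M1 M2 (Inr w) y \<longleftrightarrow> (\<exists>u. y = Inl u \<and> (u,w) \<in> (M1 - M2) \<union> (M2 - M1))"
  by (auto simp: dg_adj_def)

lemma deg_man: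
  assumes "card {y. dg_adj M1 M2 (Inl u) y} = 2"
  shows "\<exists>w. (u,w) \<in> M2 \<and> (u,w) \<notin> M1" and "\<exists>w. (u,w) \<in> M1 \<and> (u,w) \<notin> M2"
proof -
  show "\<exists>w. (u,w) \<in> M2 \<and> (u,w) \<notin> M1"
  proof (rule ccontr)
    assume n: "\<not> ?thesis"
    have "card {y. dg_adj M1 M2 (Inl u) y} \<le> 1"
      by (rule card_le1_aux) (use n M1_u in \<open>auto simp: adj_Inl\<close>)
    then show False using assms by simp
  qed
  show "\<exists>w. (u,w) \<in> M1 \<and> (u,w) \<notin> M2"
  proof (rule ccontr)
    assume n: "\<not> ?thesis"
    have "card {y. dg_adj M1 M2 (Inl u) y} \<le> 1"
      by (rule card_le1_aux) (use n M2_u in \<open>auto simp: adj_Inl\<close>)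
    then show False using assms by simp
  qed
qed

lemma deg_woman:
  assumes "card {y. dg_adj M1 M2 (Inr w) y} = 2"
  shows "\<exists>u. (u,w) \<in> M2 \<and> (u,w) \<notin> M1" and "\<exists>u. (u,w) \<in> M1 \<and> (u,w) \<notin> M2"
proof -
  show "\<exists>u. (u,w) \<in> M2 \<and> (u,w) \<notin> M1"
  proof (rule ccontr)
    assume n: "\<not> ?thesis"
    have "card {y. dg_adj M1 M2 (Inr w) y} \<le> 1"
      by (rule card_le1_aux) (use n M1_w in \<open>auto simp: adj_Inr\<close>)
    then show False using assms by simp
  qed
  show "\<exists>u. (u,w) \<in> M1 \<and> (u,w) \<notin> M2"
  proof (rule ccontr)
    assume n: "\<not> ?thesis"
    have "card {y. dg_adj M1 M2 (Inr w) y} \<le> 1"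
      by (rule card_le1_aux) (use n M2_w in \<open>auto simp: adj_Inr\<close>)
    then show False using assms by simp
  qed
qed

definition A :: "'m \<Rightarrow> bool" where
  "A u \<longleftrightarrow> (\<forall>w w'. (u,w) \<in> M2 \<longrightarrow> (u,w') \<in> M1 \<longrightarrow> prefM u w w')"

lemma step_A:
  assumes "A u" "(u,w) \<in> M2" "(u',w) \<in> M1" "u \<noteq> u'" "(u,a) \<in> M1"
  shows "A u'"
  unfolding A_def
proof (intro allI impI)
  fix c a' assume c: "(u',c) \<in> M2" and a': "(u',a') \<in> M1"
  have "a' = w" using a' assms M1_u by blast
  have pa: "prefM u w a" using assms A_def by blast
  have wW: "w \<in> W2" and uU: "u \<in> U" and u'U: "u' \<in> U" and cW: "c \<in> W2"
    using assms c M2_sub M1_sub by auto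
  have "\<not> prefW w u u'" using block1[OF assms(5) pa assms(3)] by blast
  then have pw: "prefW w u' u" using totW[OF wW uU u'U assms(4)] by blast
  have "c \<noteq> w" using c assms M2_w by blast
  have "\<not> prefM u' w c" using block2[OF c _ assms(2) pw] by blast
  then show "prefM u' c a'" using totM[OF u'U cW wW \<open>c \<noteq> w\<close>] \<open>a' = w\<close> by blast
qed

lemma cycle_types:
  assumes cyc: "dg_cycle U W2 M1 M2 C"
  shows "typeI_cycle prefM prefW U W2 M1 M2 C \<or> typeII_cycle prefM prefW U W2 M1 M2 C"
proof -
  let ?V = "dg_vertices U W2"
  let ?R = "{(a, b). dg_adj M1 M2 a b}"
  obtain v where vV: "v \<in> ?V" and Cdef: "C = dg_component U W2 M1 M2 v"
    using cyc by (auto simp: dg_cycle_def dg_components_def)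
  have deg: "\<And>x. x \<in> C \<Longrightarrow> card {y. dg_adj M1 M2 x y} = 2"
    using cyc by (auto simp: dg_cycle_def)
  have adjV: "\<And>x y. dg_adj M1 M2 x y \<Longrightarrow> y \<in> ?V"
    using M1_sub M2_sub by (auto simp: dg_adj_def dg_vertices_def)
  have clos: "\<And>x y. x \<in> C \<Longrightarrow> dg_adj M1 M2 x y \<Longrightarrow> y \<in> C"
  proof -
    fix x y assume "x \<in> C" "dg_adj M1 M2 x y"
    then have "(v,x) \<in> ?R\<^sup>*" "(x,y) \<in> ?R" "y \<in> ?V" using Cdef adjV by (auto simp: dg_component_def)
    then have "(v,y) \<in> ?R\<^sup>*" by (meson rtrancl_into_rtrancl)
    then show "y \<in> C" using Cdef \<open>y \<in> ?V\<close> by (auto simp: dg_component_def)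
  qed
  have CU: "\<And>u. Inl u \<in> C \<Longrightarrow> u \<in> U"
    using Cdef by (auto simp: dg_component_def dg_vertices_def)
  define S where "S = {u. Inl u \<in> C}"
  define m2 where "m2 u = (THE w. (u,w) \<in> M2)" for u
  define p1 where "p1 w = (THE u. (u,w) \<in> M1)" for w
  define s where "s u = p1 (m2 u)" for u
  have m2_eq: "\<And>u w. (u,w) \<in> M2 \<Longrightarrow> m2 u = w"
    unfolding m2_def using M2_u by blast
  have p1_eq: "\<And>u w. (u,w) \<in> M1 \<Longrightarrow> p1 w = u"
    unfolding p1_def using M1_w by blast
  have sprops: "\<And>u. u \<in> S \<Longrightarrow> (u, m2 u) \<in> M2 \<and> (u, m2 u) \<notin> M1 \<and> (s u, m2 u) \<in> M1 \<and>
      (s u, m2 u) \<notin> M2 \<and> s u \<in> S"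
  proof -
    fix u assume "u \<in> S"
    then have uC: "Inl u \<in> C" by (simp add: S_def)
    obtain w where w: "(u,w) \<in> M2" "(u,w) \<notin> M1" using deg_man(1)[OF deg[OF uC]] by blast
    have wC: "Inr w \<in> C" using clos[OF uC] w by (auto simp: adj_Inl)
    obtain a where a: "(a,w) \<in> M1" "(a,w) \<notin> M2" using deg_woman(2)[OF deg[OF wC]] by blast
    have aC: "Inl a \<in> C" using clos[OF wC] a by (auto simp: adj_Inr)
    have "m2 u = w" using m2_eq w by blast
    moreover have "s u = a" using p1_eq a \<open>m2 u = w\<close> by (simp add: s_def)
    ultimately show "(u, m2 u) \<in> M2 \<and> (u, m2 u) \<notin> M1 \<and> (s u, m2 u) \<in> M1 \<and>
      (s u, m2 u) \<notin> M2 \<and> s u \<in> S" using w a aC by (simp add: S_def)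
  qed
  have injs: "inj_on s S"
  proof (rule inj_onI)
    fix x y assume "x \<in> S" "y \<in> S" "s x = s y"
    then have "m2 x = m2 y" using sprops M1_u by metis
    then show "x = y" using sprops \<open>x \<in> S\<close> \<open>y \<in> S\<close> M2_w by metis
  qed
  have finS: "finite S" using CU fin by (auto simp: S_def intro: finite_subset)
  have Afw: "\<And>u. u \<in> S \<Longrightarrow> A u \<Longrightarrow> A (s u)"
  proof -
    fix u assume "u \<in> S" "A u"
    have uC: "Inl u \<in> C" using \<open>u \<in> S\<close> by (simp add: S_def)
    obtain a where "(u,a) \<in> M1" using deg_man(2)[OF deg[OF uC]] by blast
    have "s u \<noteq> u" using sprops[OF \<open>u \<in> S\<close>] by auto
    then show "A (s u)" using step_A[OF \<open>A u\<close> _ _ _ \<open>(u,a) \<in> M1\<close>] sprops[OF \<open>u \<in> S\<close>] by metis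
  qed
  have Abw: "\<And>u. u \<in> S \<Longrightarrow> A (s u) \<Longrightarrow> A u"
  proof -
    let ?T = "{u \<in> S. A u}"
    have sT: "s ` ?T = ?T"
    proof (rule endo_inj_surj)
      show "finite ?T" using finS by simp
      show "s ` ?T \<subseteq> ?T" using Afw sprops by blast
      show "inj_on s ?T" using injs by (rule inj_on_subset) blast
    qed
    fix u assume "u \<in> S" "A (s u)"
    then have "s u \<in> ?T" using sprops by auto
    then have "s u \<in> s ` ?T" by (subst sT)
    then obtain v where "v \<in> ?T" "s u = s v" by auto
    then have "u = v" using injs \<open>u \<in> S\<close> by (auto dest: inj_onD)
    then show "A u" using \<open>v \<in> ?T\<close> by simp
  qed
  define Q where "Q = case_sum A (\<lambda>w. \<exists>u. (u,w) \<in> M2 \<and> A u)"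
  have QInr: "\<And>u w. (u,w) \<in> M2 \<Longrightarrow> Q (Inr w) = A u"
    unfolding Q_def using M2_w by auto
  have Qedge: "\<And>x y. x \<in> C \<Longrightarrow> dg_adj M1 M2 x y \<Longrightarrow> Q x = Q y"
  proof -
    have key: "\<And>a b. Inl a \<in> C \<Longrightarrow> Inr b \<in> C \<Longrightarrow> (a,b) \<in> (M1 - M2) \<union> (M2 - M1) \<Longrightarrow> Q (Inl a) = Q (Inr b)"
    proof -
      fix a b assume aC: "Inl a \<in> C" and bC: "Inr b \<in> C" and ab: "(a,b) \<in> (M1 - M2) \<union> (M2 - M1)"
      show "Q (Inl a) = Q (Inr b)"
      proof (cases "(a,b) \<in> M2")
        case True then show ?thesis using QInr by (simp add: Q_def)
      next
        case False
        then have ab1: "(a,b) \<in> M1" using ab by auto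
        obtain c where c: "(c,b) \<in> M2" "(c,b) \<notin> M1" using deg_woman(1)[OF deg[OF bC]] by blast
        have cC: "Inl c \<in> C" using clos[OF bC] c by (auto simp: adj_Inr)
        have cS: "c \<in> S" using cC by (simp add: S_def)
        have "s c = a" using m2_eq[OF c(1)] p1_eq[OF ab1] by (simp add: s_def)
        then have "A c = A a" using Afw[OF cS] Abw[OF cS] by auto
        then show ?thesis using QInr[OF c(1)] by (simp add: Q_def)
      qed
    qed
    fix x y assume xC: "x \<in> C" and xy: "dg_adj M1 M2 x y"
    have yC: "y \<in> C" using clos[OF xC xy] .
    from xy obtain a b where ab: "(a,b) \<in> (M1 - M2) \<union> (M2 - M1)"
      and dj: "(x = Inl a \<and> y = Inr b) \<or> (x = Inr b \<and> y = Inl a)" by (auto simp: dg_adj_def)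
    from dj show "Q x = Q y"
    proof
      assume "x = Inl a \<and> y = Inr b" then show ?thesis using key[of a b] xC yC ab by simp
    next
      assume "x = Inr b \<and> y = Inl a" then show ?thesis using key[of a b] xC yC ab by simp
    qed
  qed
  have const: "\<And>y. (v,y) \<in> ?R\<^sup>* \<Longrightarrow> y \<in> C \<and> Q y = Q v"
  proof -
    fix y assume "(v,y) \<in> ?R\<^sup>*"
    then show "y \<in> C \<and> Q y = Q v"
    proof (induction rule: rtrancl_induct)
      case base then show ?case using vV Cdef by (auto simp: dg_component_def)
    next
      case (step x z)
      then have xC: "x \<in> C" and Qx: "Q x = Q v" and xz: "dg_adj M1 M2 x z" by auto
      show ?case using clos[OF xC xz] Qedge[OF xC xz] Qx by simp
    qed
  qed
  have QC: "Q y = Q v" if yC: "y \<in> C" for y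
  proof -
    have "(v,y) \<in> ?R\<^sup>*" using yC unfolding Cdef dg_component_def by blast
    then show ?thesis using const by blast
  qed
  have AC: "A u = Q v" if uC: "Inl u \<in> C" for u
  proof -
    have "Q (Inl u) = A u" by (simp add: Q_def)
    then show ?thesis using QC[OF uC] by simp
  qed
  have distinct: "\<And>u u' w. Inr w \<in> C \<Longrightarrow> (u',w) \<in> M1 \<Longrightarrow> (u,w) \<in> M2 \<Longrightarrow>
       u \<noteq> u' \<and> Inl u \<in> C \<and> Inl u' \<in> C \<and> (u,w) \<notin> M1 \<and> (u',w) \<notin> M2"
  proof -
    fix u u' w assume wC: "Inr w \<in> C" and u': "(u',w) \<in> M1" and u: "(u,w) \<in> M2"
    obtain a where a: "(a,w) \<in> M1" "(a,w) \<notin> M2" using deg_woman(2)[OF deg[OF wC]] by blast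
    have "a = u'" using a u' M1_w by blast
    then have ne: "u \<noteq> u'" using a u by auto
    have "(u,w) \<notin> M1" using ne u' M1_w by blast
    moreover have "(u',w) \<notin> M2" using ne u M2_w by blast
    ultimately show "u \<noteq> u' \<and> Inl u \<in> C \<and> Inl u' \<in> C \<and> (u,w) \<notin> M1 \<and> (u',w) \<notin> M2"
      using ne clos[OF wC] u u' by (auto simp: adj_Inr)
  qed
  show ?thesis
  proof (cases "Q v")
    case True
    have men: "\<forall>u w w'. Inl u \<in> C \<longrightarrow> (u, w) \<in> M2 \<longrightarrow> (u, w') \<in> M1 \<longrightarrow> prefM u w w'"
      using AC True by (auto simp: A_def)
    have women: "\<forall>w u u'. Inr w \<in> C \<longrightarrow> (u', w) \<in> M1 \<longrightarrow> (u, w) \<in> M2 \<longrightarrow> prefW w u' u"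
    proof (intro allI impI)
      fix w u u' assume wC: "Inr w \<in> C" and u': "(u',w) \<in> M1" and u: "(u,w) \<in> M2"
      note d = distinct[OF wC u' u]
      obtain a0 where a0: "(u,a0) \<in> M1" using deg_man(2)[OF deg, of u] d by blast
      have pa: "prefM u w a0" using men d u a0 by blast
      have "\<not> prefW w u u'" using block1[OF a0 pa u'] by blast
      moreover have "w \<in> W2" "u \<in> U" "u' \<in> U" using u u' M2_sub M1_sub by auto
      ultimately show "prefW w u' u" using totW d by blast
    qed
    show ?thesis using men women cyc by (simp add: typeI_cycle_def)
  next
    case False
    have men: "\<forall>u w w'. Inl u \<in> C \<longrightarrow> (u, w) \<in> M2 \<longrightarrow> (u, w') \<in> M1 \<longrightarrow> prefM u w' w"
    proof (intro allI impI)
      fix u w w' assume uC: "Inl u \<in> C" and w: "(u,w) \<in> M2" and w': "(u,w') \<in> M1"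
      have "\<not> A u" using AC[OF uC] False by simp
      then obtain w0 w0' where "(u,w0) \<in> M2" "(u,w0') \<in> M1" "\<not> prefM u w0 w0'"
        by (auto simp: A_def)
      then have np: "\<not> prefM u w w'" using w w' M2_u M1_u by metis
      obtain c where c: "(u,c) \<in> M2" "(u,c) \<notin> M1" using deg_man(1)[OF deg[OF uC]] by blast
      have "c = w" using c w M2_u by blast
      then have ne: "w \<noteq> w'" using c w' by auto
      have "u \<in> U" "w \<in> W2" "w' \<in> W2" using w w' M2_sub M1_sub by auto
      then show "prefM u w' w" using totM ne np by blast
    qed
    have women: "\<forall>w u u'. Inr w \<in> C \<longrightarrow> (u', w) \<in> M1 \<longrightarrow> (u, w) \<in> M2 \<longrightarrow> prefW w u u'"
    proof (intro allI impI)
      fix w u u' assume wC: "Inr w \<in> C" and u': "(u',w) \<in> M1" and u: "(u,w) \<in> M2"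
      note d = distinct[OF wC u' u]
      obtain c where c: "(u',c) \<in> M2" using deg_man(1)[OF deg, of u'] d by blast
      have pc: "prefM u' w c" using men d c u' by blast
      have "\<not> prefW w u' u" using block2[OF c pc u] by blast
      moreover have "w \<in> W2" "u \<in> U" "u' \<in> U" using u u' M2_sub M1_sub by auto
      ultimately show "prefW w u u'" using totW d by blast
    qed
    show ?thesis using men women cyc by (simp add: typeII_cycle_def)
  qed
qed

lemma dominates: "men_dominates prefM U (M2_prime prefM prefW U W2 M1 M2) M2"
  unfolding men_dominates_def
proof (intro ballI allI impI)
  fix u w' assume uU: "u \<in> U" and uw: "(u,w') \<in> M2"
  show "\<exists>w. (u, w) \<in> M2_prime prefM prefW U W2 M1 M2 \<and> (w = w' \<or> prefM u w w')"
  proof (cases "(u,w') \<in> M1")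
    case True then show ?thesis using uw by (auto simp: M2_prime_def)
  next
    case False
    define C where "C = dg_component U W2 M1 M2 (Inl u)"
    have uV: "Inl u \<in> dg_vertices U W2" using uU by (simp add: dg_vertices_def)
    have Cc: "C \<in> dg_components U W2 M1 M2" using uV by (simp add: C_def dg_components_def)
    have uC: "Inl u \<in> C" using uV by (simp add: C_def dg_component_def)
    show ?thesis
    proof (cases "dg_cycle U W2 M1 M2 C")
      case False
      then have "dg_path U W2 M1 M2 C" using Cc by (simp add: dg_path_def)
      then show ?thesis using uw \<open>(u,w') \<notin> M1\<close> uC by (auto simp: M2_prime_def)
    next
      case True
      from cycle_types[OF True] show ?thesis
      proof
        assume "typeI_cycle prefM prefW U W2 M1 M2 C"
        then show ?thesis using uw \<open>(u,w') \<notin> M1\<close> uC by (auto simp: M2_prime_def)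
      next
        assume t2: "typeII_cycle prefM prefW U W2 M1 M2 C"
        have "card {y. dg_adj M1 M2 (Inl u) y} = 2" using True uC by (simp add: dg_cycle_def)
        then obtain a where a: "(u,a) \<in> M1" "(u,a) \<notin> M2" using deg_man(2) by blast
        have "prefM u a w'" using t2 uC uw a by (simp add: typeII_cycle_def)
        moreover have "(u,a) \<in> M2_prime prefM prefW U W2 M1 M2"
          using t2 uC a by (auto simp: M2_prime_def)
        ultimately show ?thesis by blast
      qed
    qed
  qed
qed

end

theorem mainTheorem6:
  fixes U :: "'m set" and W1 W2 :: "'w set"
    and prefM :: "'m \<Rightarrow> 'w \<Rightarrow> 'w \<Rightarrow> bool" and prefW :: "'w \<Rightarrow> 'm \<Rightarrow> 'm \<Rightarrow> bool"
    and M1' M2 :: "('m \<times> 'w) set"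
  assumes "finite U" and "finite W2" and "W1 \<subseteq> W2"
    and "card W1 \<le> card W2" and "card W2 = card U"
    and "\<forall>u\<in>U. strict_total_on W2 (prefM u)"
    and "\<forall>w\<in>W2. strict_total_on U (prefW w)"
    and "stable_matching prefM prefW U W1 M1'"
    and "stable_matching prefM prefW U W2 M2"
  shows "men_dominates prefM U (M2_prime prefM prefW U W2 M1' M2) M2"
  using dominates[OF assms(1) assms(3) assms(6) assms(7) assms(8) assms(9)] .

end
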